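(* Let $m\le k\le n$ be positive integers, $\mathbf a_1,\dots,\mathbf a_n\in\mathbb R^m$. For a multiset $\mathcal R$ with support in $[n]$ let $f(\mathcal R)=[\det(\sum_{i\in\mathcal R}\mathbf a_i\mathbf a_i^\top)]^{1/m}$ (sum with multiplicity), and let $w^*=\max\{[\det(\sum_{i\in[n]}x_i\mathbf a_i\mathbf a_i^\top)]^{1/m}:\sum_ix_i=k,\ \mathbf x\in\mathbb Z_+^n\}$ be the optimal value of the $D$-optimal design problem with repetitions. Let $\hat{\mathbf x}\in\mathbb Q_+^n$ be a rational optimal solution of the relaxation $\max\{[\det(\sum_{i\in[n]}x_i\mathbf a_i\mathbf a_i^\top)]^{1/m}:\sum_ix_i=k,\ \mathbf x\in\mathbb R_+^n\}$. Let $\mathcal S$ be the random multiset obtained by $k$ independent draws from $[n]$, each equal to $i$ with probability $\hat x_i/k$. Let $q$ be a positive integer with $q\hat x_i\in\mathbb Z_+$ for all $i$, let $\mathcal A_q$ be a collection of $qk$ distinct items of which exactly $q\hat x_i$ carry label $i$, choose a uniformly random $k$-element subset of $\mathcal A_q$, and let $\mathcal S_q$ be the multiset of labels of the chosen items. Then $$\big(\mathbb E[(f(\mathcal S_q))^m]\big)^{1/m}\ge\big(\mathbb E[(f(\mathcal S))^m]\big)^{1/m}\ge g(m,k)^{-1}w^*,$$ where $$g(m,k)=\Big[\frac{(k-m)!\,k^m}{k!}\Big]^{1/m}\le\min\Big\{e,\ \frac{k}{k-m+1}\Big\}.$$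
   Context: $[n]=\{1,\dots,n\}$, $\mathbb Q_+$ the nonnegative rationals, $\mathbb Z_+$ the nonnegative integers, $\mathbb R_+$ the nonnegative reals. *)

theory Defs
  imports "HOL-Analysis.Analysis" "HOL-Library.Multiset"
begin

definition outer :: "real^'m \<Rightarrow> real^'m^'m" where
  "outer v = (\<chi> i j. v$i * v$j)"

definition fval :: "(nat \<Rightarrow> real^'m) \<Rightarrow> nat multiset \<Rightarrow> real" where
  "fval a R = det (\<Sum>i\<in>#R. outer (a i)) powr (1 / real CARD('m))"

definition obj :: "(nat \<Rightarrow> real^'m) \<Rightarrow> nat \<Rightarrow> (nat \<Rightarrow> real) \<Rightarrow> real" where
  "obj a n x = det (\<Sum>i=1..n. x i *\<^sub>R outer (a i)) powr (1 / real CARD('m))"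

definition wstar :: "(nat \<Rightarrow> real^'m) \<Rightarrow> nat \<Rightarrow> nat \<Rightarrow> real" where
  "wstar a n k = Max {obj a n (\<lambda>i. real (x i)) | x :: nat \<Rightarrow> nat.
       (\<forall>i. i \<notin> {1..n} \<longrightarrow> x i = 0) \<and> (\<Sum>i=1..n. x i) = k}"

definition gmk :: "nat \<Rightarrow> nat \<Rightarrow> real" where
  "gmk m k = (fact (k - m) * real k ^ m / fact k) powr (1 / real m)"

text \<open>E[f(S)^m] where S is the multiset of k independent draws from [n],
  each draw equal to i with probability xh i / k.  Outcomes are the sequences
  s : {0..<k} -> {1..n}.\<close>
definition E_iid :: "(nat \<Rightarrow> real^'m) \<Rightarrow> nat \<Rightarrow> nat \<Rightarrow> (nat \<Rightarrow> real) \<Rightarrow> real" where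
  "E_iid a n k xh = (\<Sum>s \<in> {0..<k} \<rightarrow>\<^sub>E {1..n}.
       (\<Prod>j<k. xh (s j) / real k) * fval a (image_mset s (mset_set {0..<k})) ^ CARD('m))"

definition E_sub :: "(nat \<Rightarrow> real^'m) \<Rightarrow> nat \<Rightarrow> 'b set \<Rightarrow> ('b \<Rightarrow> nat) \<Rightarrow> real" where
  "E_sub a k A lab = (\<Sum>T \<in> {T. T \<subseteq> A \<and> card T = k}.
       fval a (image_mset lab (mset_set T)) ^ CARD('m)) / real (card A choose k)"

end

theory Submission
  imports Defs
begin

lemma det_rows_sum_lemma_gen:
  fixes a :: "'n::finite \<Rightarrow> 'j \<Rightarrow> 'a::comm_ring_1^'n" and T :: "'n set"
  assumes fS: "finite S"
  shows "det ((\<chi> i. if i \<in> T then sum (a i) S else c i):: 'a^'n^'n) =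
    (\<Sum>f\<in>Pi\<^sub>E T (\<lambda>_. S). det((\<chi> i. if i \<in> T then a i (f i) else c i)::'a^'n^'n))"
  using finite[of T]
proof (induction T arbitrary: c rule: finite_induct)
  case empty
  then show ?case by simp
next
  case (insert z T c)
  have "det ((\<chi> i. if i \<in> insert z T then sum (a i) S else c i):: 'a^'n^'n) =
     det ((\<chi> i. if i = z then sum (a i) S else (if i \<in> T then sum (a i) S else c i)):: 'a^'n^'n)"
    by (intro arg_cong[where f=det]) (simp add: vec_eq_iff)
  also have "\<dots> = (\<Sum>j\<in>S. det ((\<chi> i. if i = z then a i j else (if i \<in> T then sum (a i) S else c i)):: 'a^'n^'n))"
    by (rule det_linear_row_sum[OF fS])
  also have "\<dots> = (\<Sum>j\<in>S. det ((\<chi> i. if i \<in> T then sum (a i) S else (if i = z then a i j else c i)):: 'a^'n^'n))"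
    using insert by (intro sum.cong refl arg_cong[where f=det]) (auto simp: vec_eq_iff)
  also have "\<dots> = (\<Sum>j\<in>S. \<Sum>f\<in>Pi\<^sub>E T (\<lambda>_. S). det ((\<chi> i. if i \<in> T then a i (f i) else (if i = z then a i j else c i)):: 'a^'n^'n))"
    using insert by simp
  also have "\<dots> = (\<Sum>(j,f)\<in>S \<times> Pi\<^sub>E T (\<lambda>_. S). det ((\<chi> i. if i \<in> T then a i (f i) else (if i = z then a i j else c i)):: 'a^'n^'n))"
    by (simp add: sum.cartesian_product)
  also have "\<dots> = (\<Sum>(j,f)\<in>S \<times> Pi\<^sub>E T (\<lambda>_. S). det ((\<chi> i. if i \<in> insert z T then a i ((f(z:=j)) i) else c i):: 'a^'n^'n))"
  proof (intro sum.cong refl, clarsimp)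
    fix j f assume "f \<in> T \<rightarrow>\<^sub>E S"
    show "det ((\<chi> i. if i \<in> T then a i (f i) else (if i = z then a i j else c i)):: 'a^'n^'n) =
      det ((\<chi> i. if i = z \<or> i \<in> T then a i ((f(z:=j)) i) else c i):: 'a^'n^'n)"
      using insert(2) by (intro arg_cong[where f=det]) (auto simp: vec_eq_iff)
  qed
  also have "\<dots> = (\<Sum>f\<in>Pi\<^sub>E (insert z T) (\<lambda>_. S). det ((\<chi> i. if i \<in> insert z T then a i (f i) else c i):: 'a^'n^'n))"
    unfolding PiE_insert_eq
    by (subst sum.reindex[OF inj_combinator[OF insert(2)]]) (simp add: case_prod_unfold)
  finally show ?case .
qed

lemma det_rows_sum_gen:
  fixes a :: "'n::finite \<Rightarrow> 'j \<Rightarrow> 'a::comm_ring_1^'n"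
  assumes fS: "finite S"
  shows "det ((\<chi> i. sum (a i) S):: 'a^'n^'n) =
    (\<Sum>f\<in>Pi\<^sub>E UNIV (\<lambda>_. S). det((\<chi> i. a i (f i))::'a^'n^'n))"
  using det_rows_sum_lemma_gen[OF fS, of UNIV a] by simp


lemma outer_mult_vec: "outer v *v x = (v \<bullet> x) *\<^sub>R v"
  by (simp add: vec_eq_iff outer_def matrix_vector_mult_def inner_vec_def sum_distrib_left algebra_simps)

lemma sum_matrix_vector: "(\<Sum>j\<in>J. M j) *v x = (\<Sum>j\<in>J. M j *v x)"
  by (induction J rule: infinite_finite_induct) (auto simp: matrix_vector_mult_add_rdistrib)

definition Qd :: "(nat \<Rightarrow> real^'m) \<Rightarrow> ('m \<Rightarrow> nat) \<Rightarrow> real" where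
  "Qd a \<psi> = (\<Prod>r\<in>UNIV. a (\<psi> r) $ r) * det (\<chi> r. a (\<psi> r))"

lemma Qd_noninj: "\<not> inj \<psi> \<Longrightarrow> Qd a \<psi> = 0"
proof -
  assume "\<not> inj \<psi>"
  then obtain i j where "i \<noteq> j" "\<psi> i = \<psi> j" unfolding inj_def by blast
  then have "det (\<chi> r. a (\<psi> r)) = 0"
    by (intro det_identical_rows[of i j]) (auto simp: row_def vec_eq_iff)
  then show ?thesis by (simp add: Qd_def)
qed

lemma expand_det:
  fixes a :: "nat \<Rightarrow> real^'m" and u :: "'j \<Rightarrow> nat"
  assumes "finite J"
  shows "det (\<Sum>j\<in>J. c j *\<^sub>R outer (a (u j))) =
    (\<Sum>\<phi>\<in>(UNIV::'m set) \<rightarrow>\<^sub>E J. (\<Prod>r\<in>UNIV. c (\<phi> r)) * Qd a (u \<circ> \<phi>))"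
proof -
  have "(\<Sum>j\<in>J. c j *\<^sub>R outer (a (u j))) = (\<chi> r. \<Sum>j\<in>J. (c j * a (u j) $ r) *s a (u j))"
    by (simp add: vec_eq_iff sum_component outer_def algebra_simps)
  then have "det (\<Sum>j\<in>J. c j *\<^sub>R outer (a (u j))) =
     (\<Sum>\<phi>\<in>(UNIV::'m set) \<rightarrow>\<^sub>E J. det (\<chi> r. (c (\<phi> r) * a (u (\<phi> r)) $ r) *s a (u (\<phi> r))))"
    using det_rows_sum_gen[OF assms] by simp
  also have "\<dots> = (\<Sum>\<phi>\<in>(UNIV::'m set) \<rightarrow>\<^sub>E J. (\<Prod>r\<in>UNIV. c (\<phi> r)) * Qd a (u \<circ> \<phi>))"
    by (intro sum.cong refl, subst det_rows_mul) (simp add: Qd_def prod.distrib)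
  finally show ?thesis .
qed

lemma psd_det_nonneg:
  fixes v :: "'j \<Rightarrow> real^'m"
  assumes "finite J" and c: "\<And>j. j \<in> J \<Longrightarrow> c j \<ge> 0"
  shows "det (\<Sum>j\<in>J. c j *\<^sub>R outer (v j)) \<ge> 0"
proof (rule ccontr)
  define M where "M = (\<Sum>j\<in>J. c j *\<^sub>R outer (v j))"
  define h where "h s = det (s *\<^sub>R M + (1 - s) *\<^sub>R mat 1)" for s :: real
  assume "\<not> ?thesis"
  then have h1: "h 1 < 0" by (simp add: h_def M_def)
  have h0: "h 0 = 1" by (simp add: h_def)
  have cont: "continuous_on {0..1} h"
    unfolding h_def det_def
    by (intro continuous_intros)
  obtain s where s: "0 \<le> s" "s \<le> 1" "h s = 0"
    using IVT2'[of h 1 0 0, OF _ _ _ cont] h1 h0 by auto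
  then have s1: "s < 1" using h1 by (cases "s = 1") auto
  have quad: "x \<bullet> (M *v x) = (\<Sum>j\<in>J. c j * (v j \<bullet> x)^2)" for x
    unfolding M_def sum_matrix_vector
    by (simp add: inner_sum_right scaleR_matrix_vector_assoc[symmetric] outer_mult_vec power2_eq_square inner_commute mult.assoc)
  have "inj ((*v) (s *\<^sub>R M + (1 - s) *\<^sub>R mat 1))"
  proof (subst linear_injective_0)
    show "linear ((*v) (s *\<^sub>R M + (1 - s) *\<^sub>R mat 1))" by (rule matrix_vector_mul_linear)
    show "\<forall>x. (s *\<^sub>R M + (1 - s) *\<^sub>R mat 1) *v x = 0 \<longrightarrow> x = 0"
    proof (intro allI impI)
      fix x assume x0: "(s *\<^sub>R M + (1 - s) *\<^sub>R mat 1) *v x = 0"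
      have "x \<bullet> ((s *\<^sub>R M + (1 - s) *\<^sub>R mat 1) *v x) = s * (x \<bullet> (M *v x)) + (1 - s) * (x \<bullet> x)"
        by (simp add: matrix_vector_mult_add_rdistrib scaleR_matrix_vector_assoc[symmetric] inner_add_right)
      then have "s * (x \<bullet> (M *v x)) + (1 - s) * (x \<bullet> x) = 0" using x0 by simp
      moreover have "x \<bullet> (M *v x) \<ge> 0" unfolding quad using c by (intro sum_nonneg) auto
      ultimately have "(1 - s) * (x \<bullet> x) \<le> 0" using s by (smt (verit) mult_nonneg_nonneg)
      then have "x \<bullet> x \<le> 0" using s1 by (simp add: mult_le_0_iff)
      then show "x = 0" by (metis inner_eq_zero_iff inner_ge_zero order_antisym)
    qed
  qed
  then have "det (matrix ((*v) (s *\<^sub>R M + (1 - s) *\<^sub>R mat 1))) \<noteq> 0"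
    using det_nz_iff_inj matrix_vector_mul_linear by blast
  then show False using s by (simp add: h_def matrix_of_matrix_vector_mul)
qed




lemma marg_fiber:
  fixes \<phi> :: "'m::finite \<Rightarrow> nat" and \<psi> :: "'m \<Rightarrow> nat"
  assumes inj: "inj \<phi>" and phik: "\<And>r. \<phi> r < k" and psi: "\<And>r. \<psi> r \<in> {1..n}"
    and w1: "(\<Sum>i\<in>{1..n}. w i) = (1::real)"
  shows "(\<Sum>s\<in>{s \<in> {0..<k} \<rightarrow>\<^sub>E {1..n}. s \<circ> \<phi> = \<psi>}. \<Prod>j<k. w (s j)) = (\<Prod>r\<in>UNIV. w (\<psi> r))"
proof -
  define B where "B j = (if j \<in> range \<phi> then {\<psi> (inv \<phi> j)} else {1..n})" for j
  have seteq: "{s \<in> {0..<k} \<rightarrow>\<^sub>E {1..n}. s \<circ> \<phi> = \<psi>} = Pi\<^sub>E {0..<k} B"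
  proof (intro set_eqI iffI)
    fix s assume s: "s \<in> {s \<in> {0..<k} \<rightarrow>\<^sub>E {1..n}. s \<circ> \<phi> = \<psi>}"
    show "s \<in> Pi\<^sub>E {0..<k} B"
    proof (rule PiE_I)
      fix j assume j: "j \<in> {0..<k}"
      show "s j \<in> B j"
      proof (cases "j \<in> range \<phi>")
        case True
        then obtain r where "j = \<phi> r" by auto
        then show ?thesis using s inj by (auto simp: B_def fun_eq_iff)
      next
        case False
        then show ?thesis using s j by (auto simp: B_def)
      qed
    next
      fix j assume "j \<notin> {0..<k}" then show "s j = undefined" using s by auto
    qed
  next
    fix s assume s: "s \<in> Pi\<^sub>E {0..<k} B"
    have "s \<in> {0..<k} \<rightarrow>\<^sub>E {1..n}"
    proof (rule PiE_I)
      fix j assume j: "j \<in> {0..<k}"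
      then have "s j \<in> B j" using s by auto
      then show "s j \<in> {1..n}" using psi by (auto simp: B_def split: if_splits)
    next
      fix j assume "j \<notin> {0..<k}" then show "s j = undefined" using s by auto
    qed
    moreover have "s \<circ> \<phi> = \<psi>"
    proof
      fix r
      have "s (\<phi> r) \<in> B (\<phi> r)" using s phik by auto
      then show "(s \<circ> \<phi>) r = \<psi> r" using inj by (simp add: B_def)
    qed
    ultimately show "s \<in> {s \<in> {0..<k} \<rightarrow>\<^sub>E {1..n}. s \<circ> \<phi> = \<psi>}" by simp
  qed
  have "(\<Sum>s\<in>Pi\<^sub>E {0..<k} B. \<Prod>j<k. w (s j)) = (\<Sum>s\<in>Pi\<^sub>E {0..<k} B. \<Prod>j\<in>{0..<k}. w (s j))"
    by (simp add: lessThan_atLeast0)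
  also have "\<dots> = (\<Prod>j\<in>{0..<k}. \<Sum>i\<in>B j. w i)"
    by (rule prod_sum_PiE[symmetric]) (auto simp: B_def)
  also have "\<dots> = (\<Prod>j\<in>{0..<k}. if j \<in> range \<phi> then w (\<psi> (inv \<phi> j)) else 1)"
    using w1 by (intro prod.cong refl) (simp add: B_def)
  also have "\<dots> = (\<Prod>j\<in>range \<phi>. w (\<psi> (inv \<phi> j)))"
  proof -
    have "range \<phi> \<subseteq> {0..<k}" using phik by auto
    then have "{0..<k} \<inter> range \<phi> = range \<phi>" by auto
    then show ?thesis by (simp add: prod.If_cases)
  qed
  also have "\<dots> = (\<Prod>r\<in>UNIV. w (\<psi> r))"
    using inj by (simp add: prod.reindex)
  finally show ?thesis using seteq by simp
qed

lemma marg_sum: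
  fixes \<phi> :: "'m::finite \<Rightarrow> nat" and G :: "('m \<Rightarrow> nat) \<Rightarrow> real"
  assumes inj: "inj \<phi>" and phik: "\<And>r. \<phi> r < k"
    and w1: "(\<Sum>i\<in>{1..n}. w i) = (1::real)"
  shows "(\<Sum>s\<in>{0..<k} \<rightarrow>\<^sub>E {1..n}. (\<Prod>j<k. w (s j)) * G (s \<circ> \<phi>))
       = (\<Sum>\<psi>\<in>(UNIV::'m set) \<rightarrow>\<^sub>E {1..n}. (\<Prod>r\<in>UNIV. w (\<psi> r)) * G \<psi>)"
proof -
  let ?S = "{0..<k} \<rightarrow>\<^sub>E {1..n}" and ?P = "(UNIV::'m set) \<rightarrow>\<^sub>E {1..n}"
  have img: "(\<lambda>s. s \<circ> \<phi>) ` ?S \<subseteq> ?P" using phik by (auto simp: PiE_UNIV_domain)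
  have "(\<Sum>s\<in>?S. (\<Prod>j<k. w (s j)) * G (s \<circ> \<phi>)) =
     (\<Sum>\<psi>\<in>?P. \<Sum>s\<in>{s\<in>?S. s \<circ> \<phi> = \<psi>}. (\<Prod>j<k. w (s j)) * G (s \<circ> \<phi>))"
    by (rule sum.group[symmetric]) (use img in \<open>auto intro: finite_PiE\<close>)
  also have "\<dots> = (\<Sum>\<psi>\<in>?P. (\<Sum>s\<in>{s\<in>?S. s \<circ> \<phi> = \<psi>}. \<Prod>j<k. w (s j)) * G \<psi>)"
    by (intro sum.cong refl) (simp add: sum_distrib_right)
  also have "\<dots> = (\<Sum>\<psi>\<in>?P. (\<Prod>r\<in>UNIV. w (\<psi> r)) * G \<psi>)"
  proof (intro sum.cong refl)
    fix \<psi> assume "\<psi> \<in> ?P"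
    then have "\<And>r. \<psi> r \<in> {1..n}" by auto
    then show "(\<Sum>s\<in>{s\<in>?S. s \<circ> \<phi> = \<psi>}. \<Prod>j<k. w (s j)) * G \<psi> = (\<Prod>r\<in>UNIV. w (\<psi> r)) * G \<psi>"
      using marg_fiber[OF inj phik _ w1] by simp
  qed
  finally show ?thesis .
qed


lemma card_product_dependent:
  assumes "finite S"
    and "\<forall>x \<in> S. finite (T x)"
  shows "card {(x, y). x \<in> S \<and> y \<in> T x} = (\<Sum>x \<in> S. card (T x))"
  using card_SigmaI[OF assms, symmetric]
  by (auto intro!: arg_cong[where f=card] simp add: Sigma_def)

lemma card_extensional_funcset_inj_on:
  assumes "finite S" "finite T" "card S \<le> card T"
  shows "card {f \<in> extensional_funcset S T. inj_on f S} = fact (card T) div (fact (card T - card S))"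
  using assms
proof (induct S arbitrary: T rule: finite_induct)
  case empty
  from this show ?case
    by (simp add: Collect_conv_if PiE_empty_domain)
next
  case (insert x S)
  have finite_delete: "finite {f : extensional_funcset S (T - {x}). inj_on f S}" for x
  proof -
    from \<open>finite T\<close> have "finite (T - {x})"
      by auto
    from \<open>finite S\<close> this have *: "finite (extensional_funcset S (T - {x}))"
      by (rule finite_PiE)
    have "{f : extensional_funcset S (T - {x}). inj_on f S} \<subseteq> (extensional_funcset S (T - {x}))"
      by auto
    with * show ?thesis
      by (auto intro: finite_subset)
  qed
  from insert have hyps: "\<forall>y \<in> T. card ({g. g \<in> extensional_funcset S (T - {y}) \<and> inj_on g S}) =
      fact (card T - 1) div fact ((card T - 1) - card S)"(is "\<forall> _ \<in> T. _ = ?k")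
    by auto
  from extensional_funcset_extend_domain_inj_on_eq[OF \<open>x \<notin> S\<close>]
  have "card {f. f \<in> extensional_funcset (insert x S) T \<and> inj_on f (insert x S)} =
      card ((\<lambda>(y, g). g(x := y)) ` {(y, g). y \<in> T \<and> g \<in> extensional_funcset S (T - {y}) \<and> inj_on g S})"
    by metis
  also from extensional_funcset_extend_domain_inj_onI[OF \<open>x \<notin> S\<close>, of T]
  have "\<dots> = card {(y, g). y \<in> T \<and> g \<in> extensional_funcset S (T - {y}) \<and> inj_on g S}"
    by (simp add: card_image)
  also have "card {(y, g). y \<in> T \<and> g \<in> extensional_funcset S (T - {y}) \<and> inj_on g S} =
      card {(y, g). y \<in> T \<and> g \<in> {f \<in> extensional_funcset S (T - {y}). inj_on f S}}"
    by auto
  also from \<open>finite T\<close> finite_delete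
  have "\<dots> = (\<Sum>y \<in> T. card {g. g \<in> extensional_funcset S (T - {y}) \<and>  inj_on g S})"
    by (subst card_product_dependent) auto
  also from hyps have "\<dots> = (card T) * ?k"
    by auto
  also have "\<dots> = card T * fact (card T - 1) div fact (card T - card (insert x S))"
    using insert unfolding div_mult1_eq[of "card T" "fact (card T - 1)"]
    by (simp add: fact_mod)
  also have "\<dots> = fact (card T) div fact (card T - card (insert x S))"
    using insert by (simp add: fact_reduce[of "card T"])
  finally show ?case .
qed

lemma card_inj_funs:
  "card {f \<in> (UNIV::'m::finite set) \<rightarrow>\<^sub>E {0..<k::nat}. inj f} = fact k div fact (k - CARD('m))"
  if "CARD('m) \<le> k"
  using card_extensional_funcset_inj_on[of "UNIV::'m set" "{0..<k}"] that by simp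

lemma powr_pow_inv:
  fixes d :: real assumes "d \<ge> 0" "m > 0"
  shows "(d powr (1 / real m)) ^ m = d"
proof (cases "d = 0")
  case True then show ?thesis using assms by simp
next
  case False then show ?thesis using assms by (simp add: powr_power)
qed

lemma mset_sum_eq: "(\<Sum>i\<in>#image_mset s (mset_set J). outer (a i)) = (\<Sum>j\<in>J. outer (a (s j)))"
  by (simp add: sum_unfold_sum_mset image_mset.compositionality o_def)

lemma fval_pow:
  fixes a :: "nat \<Rightarrow> real^'m"
  assumes "finite J"
  shows "fval a (image_mset s (mset_set J)) ^ CARD('m) = det (\<Sum>j\<in>J. outer (a (s j)))"
proof -
  have "det (\<Sum>j\<in>J. 1 *\<^sub>R outer (a (s j))) \<ge> 0"
    by (rule psd_det_nonneg[OF assms]) auto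
  then show ?thesis unfolding fval_def mset_sum_eq
    by (intro powr_pow_inv) auto
qed



definition Dd :: "(nat \<Rightarrow> real^'m) \<Rightarrow> nat \<Rightarrow> (nat \<Rightarrow> real) \<Rightarrow> real" where
  "Dd a n x = det (\<Sum>i=1..n. x i *\<^sub>R outer (a i))"

lemma Dd_expand:
  fixes a :: "nat \<Rightarrow> real^'m"
  shows "Dd a n x = (\<Sum>\<psi>\<in>(UNIV::'m set) \<rightarrow>\<^sub>E {1..n}. (\<Prod>r\<in>UNIV. x (\<psi> r)) * Qd a \<psi>)"
  using expand_det[of "{1..n}" x a "\<lambda>i. i"] by (simp add: Dd_def o_def)

lemma E_iid_formula:
  fixes a :: "nat \<Rightarrow> real^'m"
  assumes mk: "CARD('m) \<le> k" and k0: "k > 0" and xs: "(\<Sum>i=1..n. xh i) = real k"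
  shows "E_iid a n k xh = (fact k / fact (k - CARD('m))) / real k ^ CARD('m) * Dd a n xh"
proof -
  let ?S = "{0..<k} \<rightarrow>\<^sub>E {1..n}" and ?F = "(UNIV::'m set) \<rightarrow>\<^sub>E {0..<k}"
  let ?P = "(UNIV::'m set) \<rightarrow>\<^sub>E {1..n}"
  define W where "W s = (\<Prod>j<k. xh (s j) / real k)" for s :: "nat \<Rightarrow> nat"
  define w where "w i = xh i / real k" for i
  define Dw where "Dw = (\<Sum>\<psi>\<in>?P. (\<Prod>r\<in>UNIV. w (\<psi> r)) * Qd a \<psi>)"
  have w1: "(\<Sum>i\<in>{1..n}. w i) = 1" using xs k0 by (simp add: w_def sum_divide_distrib[symmetric])
  have "E_iid a n k xh = (\<Sum>s\<in>?S. W s * det (\<Sum>j\<in>{0..<k}. outer (a (s j))))"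
    unfolding E_iid_def W_def by (intro sum.cong refl) (simp add: fval_pow)
  also have "\<dots> = (\<Sum>s\<in>?S. W s * (\<Sum>\<phi>\<in>?F. Qd a (s \<circ> \<phi>)))"
    using expand_det[of "{0..<k}" "\<lambda>_. 1" a] by simp
  also have "\<dots> = (\<Sum>\<phi>\<in>?F. \<Sum>s\<in>?S. W s * Qd a (s \<circ> \<phi>))"
    by (simp add: sum_distrib_left sum.swap[of _ ?F])
  also have "\<dots> = (\<Sum>\<phi>\<in>?F. if inj \<phi> then Dw else 0)"
  proof (intro sum.cong refl)
    fix \<phi> assume phi: "\<phi> \<in> ?F"
    show "(\<Sum>s\<in>?S. W s * Qd a (s \<circ> \<phi>)) = (if inj \<phi> then Dw else 0)"
    proof (cases "inj \<phi>")
      case True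
      have "(\<Sum>s\<in>?S. W s * Qd a (s \<circ> \<phi>)) = (\<Sum>s\<in>?S. (\<Prod>j<k. w (s j)) * Qd a (s \<circ> \<phi>))"
        by (simp add: W_def w_def)
      also have "\<dots> = Dw" unfolding Dw_def
        by (rule marg_sum[OF True _ w1]) (use phi in auto)
      finally show ?thesis using True by simp
    next
      case False
      then have "\<not> inj (s \<circ> \<phi>)" for s using inj_on_imageI2 by blast
      then have "Qd a (s \<circ> \<phi>) = 0" for s by (rule Qd_noninj)
      then show ?thesis using False by simp
    qed
  qed
  also have "\<dots> = (\<Sum>\<phi>\<in>{\<phi>\<in>?F. inj \<phi>}. Dw)"
    by (simp add: sum.inter_filter[symmetric] finite_PiE)
  also have "\<dots> = real (fact k div fact (k - CARD('m))) * Dw"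
    using card_inj_funs[OF mk] by simp
  also have "real (fact k div fact (k - CARD('m))) = fact k / fact (k - CARD('m))"
    by (simp add: real_of_nat_div fact_dvd)
  also have "Dw = Dd a n xh / real k ^ CARD('m)"
    unfolding Dw_def Dd_expand w_def
    by (simp add: prod_dividef sum_divide_distrib)
  finally show ?thesis by simp
qed



lemma card_supersets:
  assumes "finite A" "R \<subseteq> A" "card R \<le> k"
  shows "card {T. T \<subseteq> A \<and> card T = k \<and> R \<subseteq> T} = (card A - card R) choose (k - card R)"
proof -
  have fR: "finite R" using assms finite_subset by blast
  have eq: "{T. T \<subseteq> A \<and> card T = k \<and> R \<subseteq> T} = (\<lambda>U. U \<union> R) ` {U. U \<subseteq> A - R \<and> card U = k - card R}"
  proof (intro set_eqI iffI)
    fix T assume T: "T \<in> {T. T \<subseteq> A \<and> card T = k \<and> R \<subseteq> T}"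
    then have fT: "finite T" using assms finite_subset by blast
    have "card (T - R) = k - card R" using T fR by (simp add: card_Diff_subset)
    moreover have "T = (T - R) \<union> R" using T by auto
    ultimately show "T \<in> (\<lambda>U. U \<union> R) ` {U. U \<subseteq> A - R \<and> card U = k - card R}"
      using T by (intro image_eqI[of _ _ "T - R"]) auto
  next
    fix T assume "T \<in> (\<lambda>U. U \<union> R) ` {U. U \<subseteq> A - R \<and> card U = k - card R}"
    then obtain U where U: "U \<subseteq> A - R" "card U = k - card R" "T = U \<union> R" by auto
    have "finite U" using U assms finite_subset by (metis finite_Diff)
    moreover have "U \<inter> R = {}" using U by auto
    ultimately have "card T = card U + card R" using U fR by (simp add: card_Un_disjoint)
    then show "T \<in> {T. T \<subseteq> A \<and> card T = k \<and> R \<subseteq> T}" using U assms by auto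
  qed
  have inj: "inj_on (\<lambda>U. U \<union> R) {U. U \<subseteq> A - R \<and> card U = k - card R}"
    by (rule inj_onI) blast
  show ?thesis unfolding eq card_image[OF inj]
    using n_subsets[of "A - R" "k - card R"] assms by (simp add: card_Diff_subset fR)
qed

lemma E_sub_sum:
  fixes a :: "nat \<Rightarrow> real^'m" and lab :: "'b \<Rightarrow> nat"
  assumes mk: "CARD('m) \<le> k" and fA: "finite A"
    and lab_range: "\<forall>x\<in>A. lab x \<in> {1..n}"
    and lab_count: "\<forall>i\<in>{1..n}. real (card {x\<in>A. lab x = i}) = real q * xh i"
  shows "(\<Sum>T \<in> {T. T \<subseteq> A \<and> card T = k}. fval a (image_mset lab (mset_set T)) ^ CARD('m))
     = real ((card A - CARD('m)) choose (k - CARD('m))) * real q ^ CARD('m) * Dd a n xh"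
proof -
  let ?TT = "{T. T \<subseteq> A \<and> card T = k}"
  let ?I = "{\<phi> \<in> (UNIV::'m set) \<rightarrow>\<^sub>E A. inj \<phi>}"
  let ?P = "(UNIV::'m set) \<rightarrow>\<^sub>E {1..n}"
  let ?C = "real ((card A - CARD('m)) choose (k - CARD('m)))"
  have fTT: "finite ?TT" using fA by (simp add: finite_Collect_subsets)
  have fI: "finite ?I" using fA by (simp add: finite_PiE)
  have step1: "fval a (image_mset lab (mset_set T)) ^ CARD('m) = (\<Sum>\<phi>\<in>{\<phi>\<in>?I. range \<phi> \<subseteq> T}. Qd a (lab \<circ> \<phi>))"
    if T: "T \<in> ?TT" for T
  proof -
    have fT: "finite T" using T fA finite_subset by blast
    have "fval a (image_mset lab (mset_set T)) ^ CARD('m) = det (\<Sum>t\<in>T. outer (a (lab t)))"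
      by (rule fval_pow[OF fT])
    also have "\<dots> = (\<Sum>\<phi>\<in>(UNIV::'m set) \<rightarrow>\<^sub>E T. Qd a (lab \<circ> \<phi>))"
      using expand_det[OF fT, of "\<lambda>_. 1" a lab] by simp
    also have "\<dots> = (\<Sum>\<phi>\<in>(UNIV::'m set) \<rightarrow>\<^sub>E T. if inj \<phi> then Qd a (lab \<circ> \<phi>) else 0)"
    proof (intro sum.cong refl)
      fix \<phi> :: "'m \<Rightarrow> 'b"
      have "\<not> inj \<phi> \<Longrightarrow> Qd a (lab \<circ> \<phi>) = 0"
        by (rule Qd_noninj) (use inj_on_imageI2 in blast)
      then show "Qd a (lab \<circ> \<phi>) = (if inj \<phi> then Qd a (lab \<circ> \<phi>) else 0)" by auto
    qed
    also have "\<dots> = (\<Sum>\<phi>\<in>{\<phi>\<in>(UNIV::'m set) \<rightarrow>\<^sub>E T. inj \<phi>}. Qd a (lab \<circ> \<phi>))"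
      using fT by (simp add: sum.inter_filter[symmetric] finite_PiE)
    also have "{\<phi>\<in>(UNIV::'m set) \<rightarrow>\<^sub>E T. inj \<phi>} = {\<phi>\<in>?I. range \<phi> \<subseteq> T}"
      using T by (auto simp: PiE_UNIV_domain)
    finally show ?thesis .
  qed
  have "(\<Sum>T\<in>?TT. fval a (image_mset lab (mset_set T)) ^ CARD('m))
      = (\<Sum>T\<in>?TT. \<Sum>\<phi>\<in>{\<phi>\<in>?I. range \<phi> \<subseteq> T}. Qd a (lab \<circ> \<phi>))"
    using step1 by (rule sum.cong[OF refl])
  also have "\<dots> = (\<Sum>\<phi>\<in>?I. \<Sum>T\<in>{T\<in>?TT. range \<phi> \<subseteq> T}. Qd a (lab \<circ> \<phi>))"
    by (rule sum.swap_restrict[OF fTT fI])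
  also have "\<dots> = (\<Sum>\<phi>\<in>?I. ?C * Qd a (lab \<circ> \<phi>))"
  proof (intro sum.cong refl)
    fix \<phi> assume phi: "\<phi> \<in> ?I"
    then have "card (range \<phi>) = CARD('m)" by (simp add: card_image)
    moreover have "range \<phi> \<subseteq> A" using phi by auto
    ultimately have "card {T\<in>?TT. range \<phi> \<subseteq> T} = (card A - CARD('m)) choose (k - CARD('m))"
      using card_supersets[OF fA, of "range \<phi>" k] mk by (simp add: conj_assoc)
    then show "(\<Sum>T\<in>{T\<in>?TT. range \<phi> \<subseteq> T}. Qd a (lab \<circ> \<phi>)) = ?C * Qd a (lab \<circ> \<phi>)"
      by simp
  qed
  also have "\<dots> = ?C * (\<Sum>\<phi>\<in>?I. Qd a (lab \<circ> \<phi>))"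
    by (simp add: sum_distrib_left)
  also have "(\<Sum>\<phi>\<in>?I. Qd a (lab \<circ> \<phi>)) = (\<Sum>\<phi>\<in>(UNIV::'m set) \<rightarrow>\<^sub>E A. Qd a (lab \<circ> \<phi>))"
  proof -
    have "(\<Sum>\<phi>\<in>(UNIV::'m set) \<rightarrow>\<^sub>E A. Qd a (lab \<circ> \<phi>)) =
        (\<Sum>\<phi>\<in>(UNIV::'m set) \<rightarrow>\<^sub>E A. if inj \<phi> then Qd a (lab \<circ> \<phi>) else 0)"
    proof (intro sum.cong refl)
      fix \<phi> :: "'m \<Rightarrow> 'b"
      have "\<not> inj \<phi> \<Longrightarrow> Qd a (lab \<circ> \<phi>) = 0"
        by (rule Qd_noninj) (use inj_on_imageI2 in blast)
      then show "Qd a (lab \<circ> \<phi>) = (if inj \<phi> then Qd a (lab \<circ> \<phi>) else 0)" by auto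
    qed
    then show ?thesis using fA by (simp add: sum.inter_filter[symmetric] finite_PiE)
  qed
  also have "(\<Sum>\<phi>\<in>(UNIV::'m set) \<rightarrow>\<^sub>E A. Qd a (lab \<circ> \<phi>))
      = (\<Sum>\<psi>\<in>?P. \<Sum>\<phi>\<in>{\<phi>\<in>(UNIV::'m set) \<rightarrow>\<^sub>E A. lab \<circ> \<phi> = \<psi>}. Qd a (lab \<circ> \<phi>))"
    by (rule sum.group[symmetric]) (use fA lab_range in \<open>auto simp: finite_PiE\<close>)
  also have "\<dots> = (\<Sum>\<psi>\<in>?P. real q ^ CARD('m) * ((\<Prod>r\<in>UNIV. xh (\<psi> r)) * Qd a \<psi>))"
  proof (intro sum.cong refl)
    fix \<psi> assume psi: "\<psi> \<in> ?P"
    have "{\<phi>\<in>(UNIV::'m set) \<rightarrow>\<^sub>E A. lab \<circ> \<phi> = \<psi>} = Pi\<^sub>E (UNIV::'m set) (\<lambda>r. {x\<in>A. lab x = \<psi> r})"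
      by (auto simp: PiE_UNIV_domain fun_eq_iff)
    then have "real (card {\<phi>\<in>(UNIV::'m set) \<rightarrow>\<^sub>E A. lab \<circ> \<phi> = \<psi>}) = (\<Prod>r\<in>UNIV. real q * xh (\<psi> r))"
      using psi lab_count by (simp add: card_PiE, intro prod.cong refl) (auto simp: PiE_UNIV_domain)
    also have "\<dots> = real q ^ CARD('m) * (\<Prod>r\<in>UNIV. xh (\<psi> r))"
      by (simp add: prod.distrib)
    finally have c: "real (card {\<phi>\<in>(UNIV::'m set) \<rightarrow>\<^sub>E A. lab \<circ> \<phi> = \<psi>}) = real q ^ CARD('m) * (\<Prod>r\<in>UNIV. xh (\<psi> r))" .
    have "(\<Sum>\<phi>\<in>{\<phi>\<in>(UNIV::'m set) \<rightarrow>\<^sub>E A. lab \<circ> \<phi> = \<psi>}. Qd a (lab \<circ> \<phi>))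
       = (\<Sum>\<phi>\<in>{\<phi>\<in>(UNIV::'m set) \<rightarrow>\<^sub>E A. lab \<circ> \<phi> = \<psi>}. Qd a \<psi>)"
      by (intro sum.cong refl) auto
    also have "\<dots> = real (card {\<phi>\<in>(UNIV::'m set) \<rightarrow>\<^sub>E A. lab \<circ> \<phi> = \<psi>}) * Qd a \<psi>" by simp
    finally show "(\<Sum>\<phi>\<in>{\<phi>\<in>(UNIV::'m set) \<rightarrow>\<^sub>E A. lab \<circ> \<phi> = \<psi>}. Qd a (lab \<circ> \<phi>))
       = real q ^ CARD('m) * ((\<Prod>r\<in>UNIV. xh (\<psi> r)) * Qd a \<psi>)" using c by simp
  qed
  also have "\<dots> = real q ^ CARD('m) * Dd a n xh"
    by (simp add: Dd_expand sum_distrib_left)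
  finally show ?thesis by simp
qed



lemma exp_ge_term:
  fixes x :: real assumes "x \<ge> 0"
  shows "x ^ n / fact n \<le> exp x"
proof -
  have s: "summable (\<lambda>i. x ^ i /\<^sub>R fact i)" by (rule summable_exp_generic)
  have "(\<Sum>i\<in>{n}. x ^ i /\<^sub>R fact i) \<le> (\<Sum>i. x ^ i /\<^sub>R fact i)"
    by (rule sum_le_suminf[OF s]) (use assms in auto)
  then show ?thesis by (simp add: exp_def divide_inverse mult.commute)
qed

lemma fact_prod_fall:
  assumes "m \<le> k"
  shows "(fact k :: real) = fact (k - m) * (\<Prod>j<m. real k - real j)"
  using assms
proof (induction m)
  case 0 then show ?case by simp
next
  case (Suc m)
  have e: "k - m = Suc (k - Suc m)" using Suc.prems by simp
  have "(fact k :: real) = fact (k - m) * (\<Prod>j<m. real k - real j)" using Suc by simp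
  also have "(fact (k - m) :: real) = (real k - real m) * fact (k - Suc m)"
    unfolding e fact_Suc using Suc.prems by (simp add: of_nat_diff)
  finally show ?case by (simp add: algebra_simps)
qed

lemma fact_lower: "fact p * (p + 1) ^ m \<le> (fact (p + m) :: nat)"
proof (induction m)
  case 0 then show ?case by simp
next
  case (Suc m)
  have "fact p * (p + 1) ^ Suc m = (p + 1) * (fact p * (p + 1) ^ m)" by (simp add: algebra_simps)
  also have "\<dots> \<le> (p + m + 1) * fact (p + m)"
    using Suc by (intro mult_mono) auto
  also have "\<dots> = fact (p + Suc m)" by (simp add: algebra_simps)
  finally show ?case .
qed

lemma root_pow:
  fixes y :: real assumes "y \<ge> 0" "m > 0"
  shows "(y ^ m) powr (1 / real m) = y"
proof (cases "y = 0")
  case True then show ?thesis using assms by simp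
next
  case False
  then have "y > 0" using assms by simp
  then show ?thesis using assms by (simp add: powr_realpow[symmetric] powr_powr)
qed

lemma avg_ineq:
  fixes t :: "nat \<Rightarrow> real"
  assumes mono: "\<And>i j. j \<le> i \<Longrightarrow> i < k \<Longrightarrow> t j \<le> t i" and mk: "m \<le> k"
  shows "real k * (\<Sum>j<m. t j) \<le> real m * (\<Sum>j<k. t j)"
proof -
  have split: "(\<Sum>j<k. t j) = (\<Sum>j<m. t j) + (\<Sum>i\<in>{m..<k}. t i)"
    using mk by (metis atLeast0LessThan sum.atLeastLessThan_concat zero_le)
  have "0 \<le> (\<Sum>i\<in>{m..<k}. \<Sum>j<m. t i - t j)"
    using mono by (intro sum_nonneg) auto
  also have "\<dots> = real m * (\<Sum>i\<in>{m..<k}. t i) - real (k - m) * (\<Sum>j<m. t j)"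
    by (simp add: sum_subtractf sum_distrib_left)
  finally have "real (k - m) * (\<Sum>j<m. t j) \<le> real m * (\<Sum>i\<in>{m..<k}. t i)" by simp
  then show ?thesis using mk split by (simp add: of_nat_diff algebra_simps)
qed

lemma X_le_exp:
  assumes mk: "m \<le> k" and k0: "k > 0"
  shows "fact (k - m) * real k ^ m / fact k \<le> exp (real m)"
proof -
  define t where "t j = ln (real k) - ln (real k - real j)" for j
  have pos: "real k - real j > 0" if "j < k" for j using that by simp
  have prodpos: "(\<Prod>j<m. real k - real j) > 0" using mk by (intro prod_pos) auto
  have X: "fact (k - m) * real k ^ m / fact k = real k ^ m / (\<Prod>j<m. real k - real j)"
    using fact_prod_fall[OF mk] by simp
  have lp: "ln (\<Prod>j<m. real k - real j) = (\<Sum>j<m. ln (real k - real j))"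
    by (rule ln_prod) (use mk in auto)
  have lnX: "ln (real k ^ m / (\<Prod>j<m. real k - real j)) = (\<Sum>j<m. t j)"
    using prodpos k0 mk lp
    by (simp add: ln_div ln_realpow ln_prod t_def sum_subtractf)
  have lnk: "(\<Sum>j<k. t j) \<le> real k"
  proof -
    have pk: "(\<Prod>j<k. real k - real j) > 0" by (intro prod_pos) auto
    have fk: "(fact k :: real) = (\<Prod>j<k. real k - real j)" using fact_prod_fall[of k k] by simp
    have lp2: "ln (\<Prod>j<k. real k - real j) = (\<Sum>j<k. ln (real k - real j))"
      by (rule ln_prod) auto
    have "(\<Sum>j<k. t j) = ln (real k ^ k / fact k)"
      unfolding fk using pk k0 lp2 by (simp add: ln_div ln_realpow ln_prod t_def sum_subtractf)
    also have "\<dots> \<le> ln (exp (real k))"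
      using exp_ge_term[of "real k" k] k0 by (subst ln_le_cancel_iff) auto
    finally show ?thesis by simp
  qed
  have "real k * (\<Sum>j<m. t j) \<le> real m * (\<Sum>j<k. t j)"
  proof (rule avg_ineq[OF _ mk])
    fix i j assume "j \<le> i" "i < k"
    then show "t j \<le> t i" unfolding t_def by (simp add: ln_le_cancel_iff)
  qed
  also have "\<dots> \<le> real m * real k" using lnk by (simp add: mult_left_mono)
  finally have "(\<Sum>j<m. t j) \<le> real m" using k0 by (simp add: mult.commute)
  then have "ln (real k ^ m / (\<Prod>j<m. real k - real j)) \<le> real m" using lnX by simp
  then have "real k ^ m / (\<Prod>j<m. real k - real j) \<le> exp (real m)"
  proof -
    have "real k ^ m / (\<Prod>j<m. real k - real j) > 0" using prodpos k0 by simp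
    then have "real k ^ m / (\<Prod>j<m. real k - real j) = exp (ln (real k ^ m / (\<Prod>j<m. real k - real j)))" by simp
    also have "\<dots> \<le> exp (real m)" using \<open>ln _ \<le> real m\<close> by simp
    finally show ?thesis .
  qed
  then show ?thesis using X by simp
qed

lemma gmk_bounds:
  assumes mk: "m \<le> k" and m0: "m > 0"
  shows "gmk m k \<le> min (exp 1) (real k / (real k - real m + 1))"
proof -
  have k0: "k > 0" using mk m0 by simp
  define X where "X = fact (k - m) * real k ^ m / fact k"
  have X0: "X \<ge> 0" by (simp add: X_def)
  have g: "gmk m k = X powr (1 / real m)" by (simp add: gmk_def X_def)
  have "X \<le> exp (real m)" using X_le_exp[OF mk k0] by (simp add: X_def)
  also have "\<dots> = exp 1 ^ m" by (simp add: exp_of_nat_mult[symmetric])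
  finally have "X powr (1 / real m) \<le> (exp 1 ^ m) powr (1 / real m)"
    using X0 by (intro powr_mono2) auto
  also have "\<dots> = exp 1" using m0 by (intro root_pow) auto
  finally have e: "gmk m k \<le> exp 1" using g by simp
  have "fact (k - m) * (k - m + 1) ^ m \<le> (fact k :: nat)"
    using fact_lower[of "k - m" m] mk by simp
  then have "real (fact (k - m) * (k - m + 1) ^ m) \<le> real (fact k)"
    by (simp only: of_nat_le_iff)
  then have h: "fact (k - m) * (real k - real m + 1) ^ m \<le> (fact k :: real)"
    using mk by (simp add: of_nat_diff add.commute)
  have pos: "real k - real m + 1 > 0" using mk by simp
  have "X \<le> (real k / (real k - real m + 1)) ^ m"
  proof -
    have "X = real k ^ m * fact (k - m) / fact k" by (simp add: X_def)
    also have "\<dots> \<le> real k ^ m * fact (k - m) / (fact (k - m) * (real k - real m + 1) ^ m)"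
      using h pos by (intro divide_left_mono) (auto intro!: mult_pos_pos)
    also have "\<dots> = (real k / (real k - real m + 1)) ^ m"
      by (simp add: power_divide)
    finally show ?thesis .
  qed
  then have "X powr (1 / real m) \<le> ((real k / (real k - real m + 1)) ^ m) powr (1 / real m)"
    using X0 by (intro powr_mono2) auto
  also have "\<dots> = real k / (real k - real m + 1)" using m0 pos by (intro root_pow) auto
  finally show ?thesis using e g by simp
qed



lemma coeff_cmp:
  assumes q: "q > 0" and mk: "m \<le> k" and k0: "k > 0"
  shows "fact k / fact (k - m) / real k ^ m \<le>
     real ((q * k - m) choose (k - m)) * real q ^ m / real ((q * k) choose k)"
proof -
  define N where "N = q * k"
  have kN: "k \<le> N" using q by (simp add: N_def)
  have C1: "real ((N - m) choose (k - m)) = fact (N - m) / (fact (k - m) * fact (N - k))"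
    using binomial_fact[where 'a=real, of "k - m" "N - m"] kN mk by simp
  have C2: "real (N choose k) = fact N / (fact k * fact (N - k))"
    using binomial_fact[where 'a=real, OF kN] by simp
  have "(fact N :: real) = fact (N - m) * (\<Prod>j<m. real N - real j)"
    using fact_prod_fall[of m N] kN mk by simp
  also have "\<dots> \<le> fact (N - m) * (\<Prod>j<m. real N)"
    using mk kN by (intro mult_left_mono prod_mono) auto
  finally have fN: "(fact N :: real) \<le> fact (N - m) * (real q * real k) ^ m"
    by (simp add: N_def)
  have p1: "(fact (N - m) :: real) > 0" "(fact (k - m) :: real) > 0" "(fact N :: real) > 0"
    "(fact k :: real) > 0" "(fact (N - k) :: real) > 0" by auto
  have rhs: "real ((N - m) choose (k - m)) * real q ^ m / real (N choose k)
     = fact k / fact (k - m) * (real q ^ m * fact (N - m) / fact N)"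
    unfolding C1 C2 using p1 by (simp add: field_simps)
  have kp: "real k ^ m > 0" using k0 by simp
  have "fact N \<le> real q ^ m * fact (N - m) * real k ^ m"
    using fN by (simp add: power_mult_distrib algebra_simps)
  then have "fact N / real k ^ m \<le> real q ^ m * fact (N - m)"
    using kp by (simp add: divide_le_eq)
  then have "1 / real k ^ m * fact N \<le> real q ^ m * fact (N - m)" by simp
  then have "1 / real k ^ m \<le> real q ^ m * fact (N - m) / fact N"
    using p1 by (simp add: le_divide_eq)
  then have "fact k / fact (k - m) * (1 / real k ^ m) \<le> fact k / fact (k - m) * (real q ^ m * fact (N - m) / fact N)"
    by (intro mult_left_mono) auto
  then show ?thesis using rhs by (simp add: N_def)
qed

lemma wstar_le:
  fixes a :: "nat \<Rightarrow> real^'m"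
  assumes n1: "n \<ge> 1"
    and xh_opt: "\<forall>x :: nat \<Rightarrow> real. (\<forall>i\<in>{1..n}. x i \<ge> 0) \<and> (\<Sum>i=1..n. x i) = real k
                   \<longrightarrow> obj a n x \<le> obj a n xh"
  shows "wstar a n k \<le> obj a n xh"
proof -
  define S where "S = {x::nat\<Rightarrow>nat. (\<forall>i. i \<notin> {1..n} \<longrightarrow> x i = 0) \<and> (\<Sum>i=1..n. x i) = k}"
  have eq: "{obj a n (\<lambda>i. real (x i)) | x :: nat \<Rightarrow> nat.
       (\<forall>i. i \<notin> {1..n} \<longrightarrow> x i = 0) \<and> (\<Sum>i=1..n. x i) = k} = (\<lambda>x. obj a n (\<lambda>i. real (x i))) ` S"
    by (auto simp: S_def)
  have "S \<subseteq> {f. \<forall>x. (x \<in> {1..n} \<longrightarrow> f x \<in> {0..k}) \<and> (x \<notin> {1..n} \<longrightarrow> f x = 0)}"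
  proof
    fix f assume f: "f \<in> S"
    show "f \<in> {f. \<forall>x. (x \<in> {1..n} \<longrightarrow> f x \<in> {0..k}) \<and> (x \<notin> {1..n} \<longrightarrow> f x = 0)}"
    proof (intro CollectI allI conjI impI)
      fix x assume x: "x \<in> {1..n}"
      have "f x \<le> (\<Sum>i=1..n. f i)" by (rule member_le_sum) (use x in auto)
      then show "f x \<in> {0..k}" using f by (simp add: S_def)
    next
      fix x assume "x \<notin> {1..n}" then show "f x = 0" using f by (simp add: S_def)
    qed
  qed
  moreover have "finite {f. \<forall>x. (x \<in> {1..n} \<longrightarrow> f x \<in> {0..k}) \<and> (x \<notin> {1..n} \<longrightarrow> f x = (0::nat))}"
    by (rule finite_set_of_finite_funs) auto
  ultimately have fS: "finite S" by (rule finite_subset)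
  have "(\<lambda>i. if i = 1 then k else 0) \<in> S" using n1 by (simp add: S_def)
  then have ne: "S \<noteq> {}" by auto
  have "\<forall>y \<in> (\<lambda>x. obj a n (\<lambda>i. real (x i))) ` S. y \<le> obj a n xh"
  proof
    fix y assume "y \<in> (\<lambda>x. obj a n (\<lambda>i. real (x i))) ` S"
    then obtain x where x: "x \<in> S" "y = obj a n (\<lambda>i. real (x i))" by auto
    have "(\<Sum>i=1..n. real (x i)) = real k" using x by (simp add: S_def flip: of_nat_sum)
    then show "y \<le> obj a n xh" using xh_opt x by auto
  qed
  then show ?thesis unfolding wstar_def eq using fS ne by (simp add: Max_le_iff)
qed



theorem proposition4:
  fixes a :: "nat \<Rightarrow> real^'m" and n k q :: nat and xh :: "nat \<Rightarrow> real"
    and A :: "'b set" and lab :: "'b \<Rightarrow> nat"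
  assumes mk: "CARD('m) \<le> k" and kn: "k \<le> n"
    and xh_nonneg: "\<forall>i\<in>{1..n}. xh i \<ge> 0"
    and xh_rat: "\<forall>i\<in>{1..n}. xh i \<in> \<rat>"
    and xh_sum: "(\<Sum>i=1..n. xh i) = real k"
    and xh_opt: "\<forall>x :: nat \<Rightarrow> real. (\<forall>i\<in>{1..n}. x i \<ge> 0) \<and> (\<Sum>i=1..n. x i) = real k
                   \<longrightarrow> obj a n x \<le> obj a n xh"
    and q_pos: "q > 0"
    and q_int: "\<forall>i\<in>{1..n}. \<exists>c::nat. real q * xh i = real c"
    and A_fin: "finite A" and A_card: "card A = q * k"
    and lab_range: "\<forall>x\<in>A. lab x \<in> {1..n}"
    and lab_count: "\<forall>i\<in>{1..n}. real (card {x\<in>A. lab x = i}) = real q * xh i"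
  shows "E_sub a k A lab powr (1 / real CARD('m)) \<ge> E_iid a n k xh powr (1 / real CARD('m))
       \<and> E_iid a n k xh powr (1 / real CARD('m)) \<ge> wstar a n k / gmk CARD('m) k
       \<and> gmk CARD('m) k \<le> min (exp 1) (real k / (real k - real CARD('m) + 1))"
proof -
  let ?m = "CARD('m)"
  have m0: "?m > 0" by simp
  have k0: "k > 0" using mk m0 by linarith
  have D0: "Dd a n xh \<ge> 0" unfolding Dd_def
    by (rule psd_det_nonneg) (use xh_nonneg in auto)
  define c0 where "c0 = (fact k / fact (k - ?m)) / real k ^ ?m"
  have c0p: "c0 > 0" using k0 by (simp add: c0_def)
  have Eiid: "E_iid a n k xh = c0 * Dd a n xh"
    using E_iid_formula[OF mk k0 xh_sum] by (simp add: c0_def)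
  have Esub: "E_sub a k A lab = real ((q * k - ?m) choose (k - ?m)) * real q ^ ?m / real ((q * k) choose k) * Dd a n xh"
    unfolding E_sub_def E_sub_sum[OF mk A_fin lab_range lab_count] A_card by simp
  have "c0 \<le> real ((q * k - ?m) choose (k - ?m)) * real q ^ ?m / real ((q * k) choose k)"
    unfolding c0_def by (rule coeff_cmp[OF q_pos mk k0])
  then have le1: "E_iid a n k xh \<le> E_sub a k A lab"
    unfolding Eiid Esub using D0 by (intro mult_right_mono)
  have E0: "E_iid a n k xh \<ge> 0" unfolding Eiid using c0p D0 by simp
  have part1: "E_sub a k A lab powr (1 / real ?m) \<ge> E_iid a n k xh powr (1 / real ?m)"
    using le1 E0 by (intro powr_mono2) auto
  have obj: "obj a n xh = Dd a n xh powr (1 / real ?m)" by (simp add: obj_def Dd_def)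
  have ws: "wstar a n k \<le> obj a n xh"
    by (rule wstar_le[OF _ xh_opt]) (use kn k0 in simp)
  have g: "gmk ?m k = 1 / c0 powr (1 / real ?m)"
  proof -
    have "fact (k - ?m) * real k ^ ?m / fact k = 1 / c0" by (simp add: c0_def)
    then have "gmk ?m k = (1 / c0) powr (1 / real ?m)" by (simp add: gmk_def)
    also have "\<dots> = 1 / c0 powr (1 / real ?m)" using c0p by (simp add: powr_divide)
    finally show ?thesis .
  qed
  have part2: "E_iid a n k xh powr (1 / real ?m) \<ge> wstar a n k / gmk ?m k"
  proof -
    have "wstar a n k / gmk ?m k = wstar a n k * c0 powr (1 / real ?m)" unfolding g by simp
    also have "\<dots> \<le> obj a n xh * c0 powr (1 / real ?m)"
      using ws by (intro mult_right_mono) auto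
    also have "\<dots> = E_iid a n k xh powr (1 / real ?m)"
      unfolding Eiid obj using c0p D0 by (simp add: powr_mult)
    finally show ?thesis .
  qed
  show ?thesis using part1 part2 gmk_bounds[OF mk m0] by simp
qed


end
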